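(* Let $w_1>w_2>\cdots>w_t$ and $u_1,\dots,u_t$ be positive integers, and let $\mathcal{S}=\sum_{i=1}^t w_i$ and $\mathcal{T}=\sum_{i=1}^t u_iw_i$. Suppose that every positive integer up to $\mathcal{S}$ is a sum of a subset of $\{w_1,\dots,w_t\}$. Then every integer $m$ with $0\le m\le \mathcal{T}$ can be written as $m=\sum_{i=1}^t a_iw_i$ with integers $0\le a_i\le u_i$. *)

theory Defs
  imports Main
begin

end

theory Submission
  imports Defs
begin

lemma sum_upd_add:
  fixes f w :: "nat \<Rightarrow> nat"
  assumes "finite A" "k \<in> A"
  shows "(\<Sum>i\<in>A. (f(k := f k + c)) i * w i) = (\<Sum>i\<in>A. f i * w i) + c * w k"
proof -
  have "(\<Sum>i\<in>A. (f(k := f k + c)) i * w i) = (f k + c) * w k + (\<Sum>i\<in>A-{k}. (f(k := f k + c)) i * w i)"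
    using assms by (simp add: sum.remove)
  also have "(\<Sum>i\<in>A-{k}. (f(k := f k + c)) i * w i) = (\<Sum>i\<in>A-{k}. f i * w i)"
    by (rule sum.cong) auto
  also have "(\<Sum>i\<in>A. f i * w i) = f k * w k + (\<Sum>i\<in>A-{k}. f i * w i)"
    using assms by (simp add: sum.remove)
  ultimately show ?thesis by (simp add: algebra_simps)
qed

lemma gen:
  fixes t :: nat and w :: "nat \<Rightarrow> nat"
  assumes subset_sums: "\<forall>n. 1 \<le> n \<and> n \<le> (\<Sum>i=1..t. w i) \<longrightarrow>
                         (\<exists>I \<subseteq> {1..t}. n = (\<Sum>i\<in>I. w i))"
  shows "\<And>u. (\<Sum>i=1..t. u i) = N \<Longrightarrow> \<forall>i\<in>{1..t}. u i > 0 \<Longrightarrow> m \<le> (\<Sum>i=1..t. u i * w i) \<Longrightarrow>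
           (\<exists>a :: nat \<Rightarrow> nat. (\<forall>i\<in>{1..t}. a i \<le> u i) \<and> m = (\<Sum>i=1..t. a i * w i))"
proof (induction N arbitrary: m rule: less_induct)
  case (less N u m)
  show ?case
  proof (cases "\<exists>k\<in>{1..t}. u k \<ge> 2")
    case False
    then have u1: "\<forall>i\<in>{1..t}. u i = 1" using less.prems(2) by force
    then have T: "(\<Sum>i=1..t. u i * w i) = (\<Sum>i=1..t. w i)" by simp
    show ?thesis
    proof (cases "m = 0")
      case True
      then show ?thesis by (rule_tac x="\<lambda>_. 0" in exI) simp
    next
      case False
      have m1: "1 \<le> m" "m \<le> (\<Sum>i=1..t. w i)" using False less.prems(3) T by simp_all
      then obtain I where I: "I \<subseteq> {1..t}" "m = (\<Sum>i\<in>I. w i)"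
        using subset_sums by blast
      have "(\<Sum>i=1..t. (if i \<in> I then 1 else 0) * w i) = (\<Sum>i\<in>{1..t} \<inter> I. w i)"
        unfolding sum.inter_restrict[OF finite_atLeastAtMost] by (rule sum.cong) auto
      also have "{1..t} \<inter> I = I" using I by blast
      finally show ?thesis using I u1
        by (rule_tac x="\<lambda>i. if i \<in> I then 1 else 0" in exI) auto
    qed
  next
    case True
    then obtain k where k: "k \<in> {1..t}" "u k \<ge> 2" by blast
    define u' where "u' = u(k := u k - 1)"
    have uu: "u = u'(k := u' k + 1)" using k unfolding u'_def by (auto simp: fun_eq_iff)
    have Tu: "(\<Sum>i=1..t. u i * w i) = (\<Sum>i=1..t. u' i * w i) + w k"
      using sum_upd_add[of "{1..t}" k u' 1 w] k uu by simp
    have Nu: "(\<Sum>i=1..t. u i) = (\<Sum>i=1..t. u' i) + 1"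
      using sum_upd_add[of "{1..t}" k u' 1 "\<lambda>_. 1"] k uu by simp
    have lt: "(\<Sum>i=1..t. u' i) < N" using Nu less.prems(1) by simp
    have pos': "\<forall>i\<in>{1..t}. u' i > 0" using less.prems(2) k unfolding u'_def by auto
    show ?thesis
    proof (cases "m \<le> (\<Sum>i=1..t. u' i * w i)")
      case True
      obtain a where a: "\<forall>i\<in>{1..t}. a i \<le> u' i" "m = (\<Sum>i=1..t. a i * w i)"
        using less.IH[OF lt refl pos' True] by blast
      have "\<forall>i\<in>{1..t}. u' i \<le> u i" unfolding u'_def by auto
      then show ?thesis using a by (rule_tac x=a in exI) (auto intro: order_trans)
    next
      case False
      have "m - w k \<le> (\<Sum>i=1..t. u' i * w i)" using less.prems(3) Tu by simp
      then obtain a where a: "\<forall>i\<in>{1..t}. a i \<le> u' i" "m - w k = (\<Sum>i=1..t. a i * w i)"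
        using less.IH[OF lt refl pos'] by blast
      have "u' k * w k \<le> (\<Sum>i=1..t. u' i * w i)"
        using k by (intro member_le_sum) auto
      moreover have "u' k \<ge> 1" using k unfolding u'_def by simp
      ultimately have "w k \<le> (\<Sum>i=1..t. u' i * w i)"
        using mult_le_mono1[of 1 "u' k" "w k"] by linarith
      then have mk: "m \<ge> w k" using False by simp
      have "(\<Sum>i=1..t. (a(k := a k + 1)) i * w i) = m"
        using sum_upd_add[of "{1..t}" k a 1 w] k a(2) mk by simp
      moreover have "\<forall>i\<in>{1..t}. (a(k := a k + 1)) i \<le> u i"
        using a(1) uu by auto
      ultimately show ?thesis by metis
    qed
  qed
qed

theorem theorem5p5:
  fixes t :: nat and w u :: "nat \<Rightarrow> nat"
  assumes pos_w: "\<forall>i\<in>{1..t}. w i > 0"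
    and pos_u: "\<forall>i\<in>{1..t}. u i > 0"
    and decr: "\<forall>i\<in>{1..t}. \<forall>j\<in>{1..t}. i < j \<longrightarrow> w i > w j"
    and subset_sums: "\<forall>n. 1 \<le> n \<and> n \<le> (\<Sum>i=1..t. w i) \<longrightarrow>
                         (\<exists>I \<subseteq> {1..t}. n = (\<Sum>i\<in>I. w i))"
  shows "\<forall>m::nat. m \<le> (\<Sum>i=1..t. u i * w i) \<longrightarrow>
           (\<exists>a :: nat \<Rightarrow> nat. (\<forall>i\<in>{1..t}. a i \<le> u i) \<and> m = (\<Sum>i=1..t. a i * w i))"
  using gen[OF subset_sums refl pos_u] by blast

end
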